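(* Let $g\in C(\mathbb{R},\mathbb{R})$. Then $\mathcal{K}_{(-\infty,g]}=\mathcal{K}_{[g,\infty)}=\{\mathrm{CL}(E):E\in\mathrm{CL}(\mathbb{R})\}$, where $(-\infty,g]=\{f\in C(\mathbb{R},\mathbb{R}):f\le g\}$ and $[g,\infty)=\{f\in C(\mathbb{R},\mathbb{R}):g\le f\}$.
   Context: $f\le g$ means $f(x)\le g(x)$ for all $x\in\mathbb{R}$. For a closed set $E\subseteq\mathbb{R}$, $\mathrm{CL}(E)$ denotes the family of all closed subsets of $E$. For $\mathcal{G}\subseteq C(\mathbb{R},\mathbb{R})$ let $R_\mathcal{G}=\{(f,E)\in C(\mathbb{R},\mathbb{R})\times\mathrm{CL}(\mathbb{R}):(\exists h\in\mathcal{G})\, f\restriction E=h\restriction E\}$; for $\mathcal{F}\subseteq C(\mathbb{R},\mathbb{R})$ put $E_\mathcal{G}(\mathcal{F})=\{E\in\mathrm{CL}(\mathbb{R}):(\forall f\in\mathcal{F})\,(f,E)\in R_\mathcal{G}\}$, and let $\mathcal{K}_\mathcal{G}=\{E_\mathcal{G}(\mathcal{F}):\mathcal{F}\subseteq C(\mathbb{R},\mathbb{R})\}$. *)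

theory Defs
  imports "HOL-Analysis.Analysis"
begin

definition Cfun :: "(real \<Rightarrow> real) set" where
  "Cfun = {f. continuous_on UNIV f}"

definition CL :: "real set \<Rightarrow> real set set" where
  "CL E = {F. closed F \<and> F \<subseteq> E}"

definition R_G :: "(real \<Rightarrow> real) set \<Rightarrow> ((real \<Rightarrow> real) \<times> real set) set" where
  "R_G G = {(f, E). f \<in> Cfun \<and> E \<in> CL UNIV \<and> (\<exists>h\<in>G. \<forall>x\<in>E. f x = h x)}"

definition E_G :: "(real \<Rightarrow> real) set \<Rightarrow> (real \<Rightarrow> real) set \<Rightarrow> real set set" where
  "E_G G F = {E \<in> CL UNIV. \<forall>f\<in>F. (f, E) \<in> R_G G}"

definition K_G :: "(real \<Rightarrow> real) set \<Rightarrow> real set set set" where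
  "K_G G = {E_G G F | F. F \<subseteq> Cfun}"

definition below_fun :: "(real \<Rightarrow> real) \<Rightarrow> (real \<Rightarrow> real) set" where
  "below_fun g = {f \<in> Cfun. \<forall>x. f x \<le> g x}"

definition above_fun :: "(real \<Rightarrow> real) \<Rightarrow> (real \<Rightarrow> real) set" where
  "above_fun g = {f \<in> Cfun. \<forall>x. g x \<le> f x}"

end

theory Submission
  imports Defs
begin

lemma closed_A_below:
  assumes "g \<in> Cfun" "F \<subseteq> Cfun"
  shows "closed {x. \<forall>f\<in>F. f x \<le> g x}"
proof -
  have "{x. \<forall>f\<in>F. f x \<le> g x} = (\<Inter>f\<in>F. {x. f x \<le> g x})" by auto
  moreover have "closed {x. f x \<le> g x}" if "f \<in> F" for f
    using that assms by (intro closed_Collect_le) (auto simp: Cfun_def)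
  ultimately show ?thesis by auto
qed

lemma closed_A_above:
  assumes "g \<in> Cfun" "F \<subseteq> Cfun"
  shows "closed {x. \<forall>f\<in>F. g x \<le> f x}"
proof -
  have "{x. \<forall>f\<in>F. g x \<le> f x} = (\<Inter>f\<in>F. {x. g x \<le> f x})" by auto
  moreover have "closed {x. g x \<le> f x}" if "f \<in> F" for f
    using that assms by (intro closed_Collect_le) (auto simp: Cfun_def)
  ultimately show ?thesis by auto
qed

lemma E_below:
  assumes "g \<in> Cfun" "F \<subseteq> Cfun"
  shows "E_G (below_fun g) F = CL {x. \<forall>f\<in>F. f x \<le> g x}"
proof -
  have key: "(f, E) \<in> R_G (below_fun g) \<longleftrightarrow> (\<forall>x\<in>E. f x \<le> g x)"
    if "f \<in> Cfun" "E \<in> CL UNIV" for f E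
  proof
    assume "(f, E) \<in> R_G (below_fun g)"
    then show "\<forall>x\<in>E. f x \<le> g x" unfolding R_G_def below_fun_def by force
  next
    assume h: "\<forall>x\<in>E. f x \<le> g x"
    have "(\<lambda>x. min (f x) (g x)) \<in> below_fun g"
      using that assms unfolding below_fun_def Cfun_def
      by (auto intro: continuous_on_min)
    moreover have "\<forall>x\<in>E. f x = min (f x) (g x)" using h by auto
    ultimately have "\<exists>h\<in>below_fun g. \<forall>x\<in>E. f x = h x" by (intro bexI[of _ "\<lambda>x. min (f x) (g x)"]) simp_all
    then show "(f, E) \<in> R_G (below_fun g)" using that unfolding R_G_def by simp
  qed
  show ?thesis
    unfolding E_G_def CL_def using key assms(2) by (auto simp: CL_def) blast+
qed

lemma E_above:
  assumes "g \<in> Cfun" "F \<subseteq> Cfun"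
  shows "E_G (above_fun g) F = CL {x. \<forall>f\<in>F. g x \<le> f x}"
proof -
  have key: "(f, E) \<in> R_G (above_fun g) \<longleftrightarrow> (\<forall>x\<in>E. g x \<le> f x)"
    if "f \<in> Cfun" "E \<in> CL UNIV" for f E
  proof
    assume "(f, E) \<in> R_G (above_fun g)"
    then show "\<forall>x\<in>E. g x \<le> f x" unfolding R_G_def above_fun_def by force
  next
    assume h: "\<forall>x\<in>E. g x \<le> f x"
    have "(\<lambda>x. max (f x) (g x)) \<in> above_fun g"
      using that assms unfolding above_fun_def Cfun_def
      by (auto intro: continuous_on_max)
    moreover have "\<forall>x\<in>E. f x = max (f x) (g x)" using h by auto
    ultimately have "\<exists>h\<in>above_fun g. \<forall>x\<in>E. f x = h x" by (intro bexI[of _ "\<lambda>x. max (f x) (g x)"]) simp_all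
    then show "(f, E) \<in> R_G (above_fun g)" using that unfolding R_G_def by simp
  qed
  show ?thesis
    unfolding E_G_def CL_def using key assms(2) by (auto simp: CL_def) blast+
qed

definition dE :: "real set \<Rightarrow> real \<Rightarrow> real" where
  "dE E x = (if E = {} then 1 else infdist x E)"

lemma dE_cont: "continuous_on UNIV (dE E)"
  unfolding dE_def by (cases "E = {}") (auto intro: continuous_on_infdist continuous_on_id)

lemma dE_nonneg: "0 \<le> dE E x"
  unfolding dE_def by (auto simp: infdist_nonneg)

lemma dE_zero: "closed E \<Longrightarrow> dE E x = 0 \<longleftrightarrow> x \<in> E"
  unfolding dE_def using in_closed_iff_infdist_zero by auto

lemma K_below:
  assumes "g \<in> Cfun"
  shows "K_G (below_fun g) = {CL E | E. E \<in> CL UNIV}"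
proof
  show "K_G (below_fun g) \<subseteq> {CL E | E. E \<in> CL UNIV}"
  proof
    fix K assume "K \<in> K_G (below_fun g)"
    then obtain F where F: "F \<subseteq> Cfun" "K = E_G (below_fun g) F" unfolding K_G_def by blast
    then have "K = CL {x. \<forall>f\<in>F. f x \<le> g x}" using E_below[OF assms] by simp
    moreover have "{x. \<forall>f\<in>F. f x \<le> g x} \<in> CL UNIV" using closed_A_below[OF assms F(1)] by (simp add: CL_def)
    ultimately show "K \<in> {CL E | E. E \<in> CL UNIV}" by blast
  qed
next
  show "{CL E | E. E \<in> CL UNIV} \<subseteq> K_G (below_fun g)"
  proof clarify
    fix E assume E: "E \<in> CL UNIV"
    define f where "f = (\<lambda>x. g x + dE E x)"
    have fC: "f \<in> Cfun" using assms dE_cont unfolding f_def Cfun_def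
      by (auto intro: continuous_on_add)
    have "{x. \<forall>h\<in>{f}. h x \<le> g x} = E"
    proof -
      have "closed E" using E by (simp add: CL_def)
      then have "\<And>x. dE E x \<le> 0 \<longleftrightarrow> x \<in> E" using dE_zero[of E] dE_nonneg[of E] by (metis order.antisym order_refl)
      then show ?thesis unfolding f_def by auto
    qed
    then have "E_G (below_fun g) {f} = CL E" using E_below[OF assms, of "{f}"] fC by simp
    then show "CL E \<in> K_G (below_fun g)" unfolding K_G_def using fC by blast
  qed
qed

lemma K_above:
  assumes "g \<in> Cfun"
  shows "K_G (above_fun g) = {CL E | E. E \<in> CL UNIV}"
proof
  show "K_G (above_fun g) \<subseteq> {CL E | E. E \<in> CL UNIV}"
  proof
    fix K assume "K \<in> K_G (above_fun g)"
    then obtain F where F: "F \<subseteq> Cfun" "K = E_G (above_fun g) F" unfolding K_G_def by blast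
    then have "K = CL {x. \<forall>f\<in>F. g x \<le> f x}" using E_above[OF assms] by simp
    moreover have "{x. \<forall>f\<in>F. g x \<le> f x} \<in> CL UNIV" using closed_A_above[OF assms F(1)] by (simp add: CL_def)
    ultimately show "K \<in> {CL E | E. E \<in> CL UNIV}" by blast
  qed
next
  show "{CL E | E. E \<in> CL UNIV} \<subseteq> K_G (above_fun g)"
  proof clarify
    fix E assume E: "E \<in> CL UNIV"
    define f where "f = (\<lambda>x. g x - dE E x)"
    have fC: "f \<in> Cfun" using assms dE_cont unfolding f_def Cfun_def
      by (auto intro: continuous_on_diff)
    have "{x. \<forall>h\<in>{f}. g x \<le> h x} = E"
    proof -
      have "closed E" using E by (simp add: CL_def)
      then have "\<And>x. dE E x \<le> 0 \<longleftrightarrow> x \<in> E" using dE_zero[of E] dE_nonneg[of E] by (metis order.antisym order_refl)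
      then show ?thesis unfolding f_def by auto
    qed
    then have "E_G (above_fun g) {f} = CL E" using E_above[OF assms, of "{f}"] fC by simp
    then show "CL E \<in> K_G (above_fun g)" unfolding K_G_def using fC by blast
  qed
qed

theorem corollary3p5:
  fixes g :: "real \<Rightarrow> real"
  assumes "g \<in> Cfun"
  shows "K_G (below_fun g) = K_G (above_fun g) \<and>
         K_G (above_fun g) = {CL E | E. E \<in> CL UNIV}"
  using K_below[OF assms] K_above[OF assms] by simp

end
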